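(* Let $0<c_1<1$ and $c_3\in\mathbb{R}$. For $0\le\alpha\le\sqrt{1-c_1}$ put $$I(\alpha)=\int_{\alpha}^{\sqrt{1-c_1}}\frac{(\rho^2+c_1)^{\frac{2m-1}{2}}}{\{1-(\rho^2+c_1)^m\}^{\frac{2m-1}{2m}}}\,d\rho ,$$ which is finite, and let $d_1=I(0)>0$. Define $\hat\alpha:(c_3-d_1,c_3+d_1)\to(0,\sqrt{1-c_1}]$ by letting $\hat\alpha(u)$ be the unique $\alpha\in(0,\sqrt{1-c_1}]$ with $I(\alpha)=|u-c_3|$ (so $\hat\alpha(c_3)=\sqrt{1-c_1}$). Then $\hat\alpha$ is a $C^2$ function with $\hat\alpha'(c_3)=\hat\alpha''(c_3)=0$; the rotational surface $\hat f(u,v)=(\hat\alpha(u)\cos v,\hat\alpha(u)\sin v,u)$, $u\in(c_3-d_1,c_3+d_1)$, has a Birkhoff–Gauss map extending as a $C^1$ map to the whole domain and has constant Minkowski Gaussian curvature $1$. Moreover $\hat\alpha(u)\to0$ as $u\to c_3\pm d_1$, and $$\lim_{u\to c_3-d_1}\hat\alpha'(u)=\frac{(1-c_1^m)^{\frac{2m-1}{2m}}}{c_1^{\frac{2m-1}{2}}},\qquad \lim_{u\to c_3+d_1}\hat\alpha'(u)=-\frac{(1-c_1^m)^{\frac{2m-1}{2m}}}{c_1^{\frac{2m-1}{2}}},$$ so the surface has singularities at the points $(0,0,c_3\pm d_1)$ on the axis.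
   Context: Fix an integer $m\ge 2$. Let $\Phi(x_1,x_2,x_3)=(x_1^2+x_2^2)^m+x_3^{2m}$ and let $\|\cdot\|$ be the norm on $\mathbb{R}^3$ whose unit sphere is $S=\{x\in\mathbb{R}^3:\Phi(x)=1\}$ (a smooth, strictly convex surface). For a surface given by a parametrization $f(s,v)$, its Birkhoff–Gauss map $\eta$ is the map into $S$ defined by requiring $\eta\in S$ and $\nabla\Phi(\eta)=\mu\, f_s\times f_v$ for some function $\mu>0$, where $\times$ is the standard cross product (so the tangent plane of $S$ at $\eta(p)$ is parallel to $T_pM$, and $d\eta_p$ is an endomorphism of $T_pM$). Where $\eta$ is $C^1$, the Minkowski Gaussian curvature is $K=\det(d\eta_p)$. *)

theory Defs
  imports "HOL-Analysis.Analysis" "HOL-Analysis.Cross3"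
begin

text \<open>The function Phi whose level set Phi = 1 is the unit sphere S of the norm.\<close>
definition Phi :: "nat \<Rightarrow> real^3 \<Rightarrow> real" where
  "Phi m x = ((x$1)^2 + (x$2)^2)^m + (x$3)^(2*m)"

definition integrandI :: "nat \<Rightarrow> real \<Rightarrow> real \<Rightarrow> real" where
  "integrandI m c1 \<rho> =
     (\<rho>^2 + c1) powr ((2 * real m - 1) / 2)
     / (1 - (\<rho>^2 + c1)^m) powr ((2 * real m - 1) / (2 * real m))"

definition Ifun :: "nat \<Rightarrow> real \<Rightarrow> real \<Rightarrow> real" where
  "Ifun m c1 \<alpha> = integral {\<alpha>..sqrt (1 - c1)} (integrandI m c1)"

definition d1 :: "nat \<Rightarrow> real \<Rightarrow> real" where
  "d1 m c1 = Ifun m c1 0"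

definition alpha_hat :: "nat \<Rightarrow> real \<Rightarrow> real \<Rightarrow> real \<Rightarrow> real" where
  "alpha_hat m c1 c3 u =
     (THE \<alpha>. \<alpha> \<in> {0<..sqrt (1 - c1)} \<and> Ifun m c1 \<alpha> = \<bar>u - c3\<bar>)"

definition fhat :: "nat \<Rightarrow> real \<Rightarrow> real \<Rightarrow> real \<times> real \<Rightarrow> real^3" where
  "fhat m c1 c3 p = vector [alpha_hat m c1 c3 (fst p) * cos (snd p),
                            alpha_hat m c1 c3 (fst p) * sin (snd p), fst p]"

text \<open>Birkhoff--Gauss map condition at a point: eta(p) lies in S and grad Phi(eta p)
  is a positive multiple of f_u x f_v (standard cross product).\<close>
definition is_BG_value :: "nat \<Rightarrow> real^3 \<Rightarrow> real^3 \<Rightarrow> real^3 \<Rightarrow> bool" where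
  "is_BG_value m fu fv e \<longleftrightarrow>
     Phi m e = 1 \<and> (\<exists>\<mu>>0. GDERIV (Phi m) e :> (\<mu> *\<^sub>R cross3 fu fv))"

text \<open>Determinant of d eta_p as an endomorphism of T_pM = span(f_u, f_v):
  writing eta_u = a f_u + b f_v and eta_v = c f_u + d f_v, the determinant is ad - bc.\<close>
definition endo_det_is :: "real^3 \<Rightarrow> real^3 \<Rightarrow> real^3 \<Rightarrow> real^3 \<Rightarrow> real \<Rightarrow> bool" where
  "endo_det_is fu fv eu ev K \<longleftrightarrow>
     (\<exists>a b c d. eu = a *\<^sub>R fu + b *\<^sub>R fv \<and> ev = c *\<^sub>R fu + d *\<^sub>R fv \<and> a * d - b * c = K)"

end

theory Submission
  imports Defs
begin

definition RR :: "real \<Rightarrow> real \<Rightarrow> real" where "RR c1 a = a^2 + c1"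
definition QQ :: "nat \<Rightarrow> real \<Rightarrow> real \<Rightarrow> real" where "QQ m c1 a = 1 - (a^2 + c1)^m"

context
  fixes m :: nat and c1 :: real
  assumes m2: "m \<ge> 2" and c1pos: "0 < c1" and c1lt: "c1 < 1"
begin

lemma s_pos: "sqrt (1 - c1) > 0" using c1lt by simp
lemma s_sq: "(sqrt (1 - c1))^2 = 1 - c1" using c1lt by simp

lemma R_bounds: assumes "0 \<le> a" "a \<le> sqrt (1-c1)"
  shows "c1 \<le> a^2 + c1" "a^2 + c1 \<le> 1"
proof -
  show "c1 \<le> a^2 + c1" by simp
  have "a^2 \<le> (sqrt (1-c1))^2" using assms by (intro power_mono) auto
  then show "a^2 + c1 \<le> 1" using s_sq by simp
qed

lemma R_lt1: assumes "0 \<le> a" "a < sqrt (1-c1)" shows "a^2 + c1 < 1"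
proof -
  have "a^2 < (sqrt (1-c1))^2" using assms by (intro power_strict_mono) auto
  then show ?thesis using s_sq by simp
qed

lemma Q_pos: assumes "0 \<le> a" "a < sqrt (1-c1)" shows "0 < 1 - (a^2 + c1)^m"
proof -
  have "(a^2 + c1)^m < 1" using R_lt1[OF assms] c1pos m2
    by (intro power_less_one_iff[THEN iffD2]) auto
  then show ?thesis by simp
qed

lemma Q_nonneg: assumes "0 \<le> a" "a \<le> sqrt (1-c1)" shows "0 \<le> 1 - (a^2 + c1)^m"
proof -
  have "(a^2 + c1)^m \<le> 1" using R_bounds[OF assms] c1pos
    by (intro power_le_one) auto
  then show ?thesis by simp
qed

lemma Q_s: "1 - ((sqrt (1-c1))^2 + c1)^m = 0" using s_sq by simp

end

context
  fixes m :: nat and c1 :: real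
  assumes m2: "m \<ge> 2" and c1pos: "0 < c1" and c1lt: "c1 < 1"
begin

lemma g_cont: "continuous_on {0..<sqrt (1-c1)} (integrandI m c1)"
proof -
  have "continuous_on {0..<sqrt (1-c1)} (\<lambda>\<rho>. (\<rho>^2 + c1) powr ((2 * real m - 1) / 2)
     / (1 - (\<rho>^2 + c1)^m) powr ((2 * real m - 1) / (2 * real m)))"
  proof -
    have a: "x^2 + c1 \<noteq> 0" if "x \<in> {0..<sqrt (1-c1)}" for x
      using c1pos by (metis add_pos_nonneg less_numeral_extra(3) zero_le_power2 add.commute)
    have b: "1 - (x^2 + c1)^m \<noteq> 0" if "x \<in> {0..<sqrt (1-c1)}" for x
      using Q_pos[OF m2 c1pos c1lt, of x] that by auto
    show ?thesis using a b by (intro continuous_intros) auto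
  qed
  then show ?thesis unfolding integrandI_def[abs_def] .
qed

lemma H_deriv:
  assumes "0 < a" "a < sqrt (1-c1)"
  shows "((\<lambda>a. - ((1 - (a^2 + c1)^m) powr (1 / (2 * real m)))) has_real_derivative
     a * (a^2+c1)^(m-1) / (1 - (a^2 + c1)^m) powr ((2 * real m - 1) / (2 * real m))) (at a)"
proof -
  have Qp: "0 < 1 - (a^2 + c1)^m" using Q_pos[OF m2 c1pos c1lt] assms by auto
  have d: "((\<lambda>a. 1 - (a^2 + c1)^m) has_real_derivative -(real m * (a^2+c1)^(m-1) * (2*a))) (at a)"
    by (auto intro!: derivative_eq_intros simp: power2_eq_square)
  have "((\<lambda>a. - ((1 - (a^2 + c1)^m) powr (1 / (2 * real m)))) has_real_derivative
     - ((1 / (2 * real m)) * (1 - (a^2 + c1)^m) powr (1 / (2 * real m) - of_nat 1) * (-(real m * (a^2+c1)^(m-1) * (2*a))))) (at a)"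
    by (intro derivative_intros DERIV_fun_powr[OF d Qp])
  moreover have "- ((1 / (2 * real m)) * (1 - (a^2 + c1)^m) powr (1 / (2 * real m) - of_nat 1) * (-(real m * (a^2+c1)^(m-1) * (2*a))))
     = a * (a^2+c1)^(m-1) / (1 - (a^2 + c1)^m) powr ((2 * real m - 1) / (2 * real m))"
  proof -
    have e: "1 / (2 * real m) - of_nat 1 = - ((2 * real m - 1) / (2 * real m))"
      using m2 by (simp add: field_simps)
    show ?thesis unfolding e powr_minus_divide using m2 by (simp add: field_simps)
  qed
  ultimately show ?thesis by simp
qed

end

context
  fixes m :: nat and c1 :: real
  assumes m2: "m \<ge> 2" and c1pos: "0 < c1" and c1lt: "c1 < 1"
begin

lemma g_integrable: "integrandI m c1 integrable_on {0..sqrt (1-c1)}"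
proof -
  define s where "s = sqrt (1-c1)"
  have s: "s > 0" unfolding s_def using c1lt by simp
  define e1 where "e1 = (2 * real m - 1) / (2 * real m)"
  define H where "H = (\<lambda>a. - ((1 - (a^2 + c1)^m) powr (1 / (2 * real m))))"
  define H' where "H' = (\<lambda>a. a * (a^2+c1)^(m-1) / (1 - (a^2 + c1)^m) powr e1)"
  define K where "K = 2 / (s * c1^(m-1))"
  have Kpos: "K > 0" unfolding K_def using s c1pos by simp
  have Hc: "continuous_on {s/2..s} H"
  proof -
    have "0 \<le> 1 - (x^2 + c1)^m" if "x \<in> {s/2..s}" for x
      using Q_nonneg[OF m2 c1pos c1lt, of x] that s unfolding s_def by auto
    then show ?thesis unfolding H_def using m2 by (intro continuous_intros continuous_on_powr') auto
  qed
  have Hd: "(H has_vector_derivative H' x) (at x)" if "x \<in> {s/2<..<s}" for x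
    using H_deriv[OF m2 c1pos c1lt, of x] that s unfolding H_def H'_def e1_def s_def
    by (simp add: has_real_derivative_iff_has_vector_derivative)
  have H'int: "H' integrable_on {s/2..s}"
    using fundamental_theorem_of_calculus_interior[OF _ Hc Hd] s by auto
  have eqs: "{s/2..s} = insert s {s/2..<s}" using s by auto
  have KH'int: "(\<lambda>x. K * H' x) integrable_on {s/2..<s}"
    using H'int unfolding eqs integrable_on_insert_iff using Kpos by simp
  have meas: "integrandI m c1 \<in> borel_measurable (lebesgue_on {s/2..<s})"
    by (rule continuous_imp_measurable_on_sets_lebesgue)
       (rule continuous_on_subset[OF g_cont[OF m2 c1pos c1lt]], auto simp: s_def)
  have bound: "\<bar>integrandI m c1 x\<bar> \<le> K * H' x" if x: "x \<in> {s/2..<s}" for x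
  proof -
    have x0: "0 \<le> x" "x < s" using x s by auto
    have Qp: "0 < 1 - (x^2 + c1)^m" using Q_pos[OF m2 c1pos c1lt x0[unfolded s_def]] .
    have R1: "x^2 + c1 \<le> 1" using R_bounds[OF m2 c1pos c1lt, of x] x0 unfolding s_def by auto
    have R0: "0 < x^2 + c1" using c1pos by (simp add: add_nonneg_pos)
    have Rp: "(x^2+c1) powr ((2 * real m - 1) / 2) \<le> 1"
      using R0 R1 m2 by (intro powr_le1) auto
    have Qe: "0 < (1 - (x^2 + c1)^m) powr e1" using Qp by simp
    have "\<bar>integrandI m c1 x\<bar> = (x^2+c1) powr ((2 * real m - 1) / 2) / (1 - (x^2 + c1)^m) powr e1"
      unfolding integrandI_def e1_def using Qe R0 by (simp add: e1_def)
    also have "\<dots> \<le> 1 / (1 - (x^2 + c1)^m) powr e1"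
      using Rp Qe by (intro divide_right_mono) auto
    also have "\<dots> \<le> K * H' x"
    proof -
      have "c1^(m-1) \<le> (x^2+c1)^(m-1)" using c1pos by (intro power_mono) auto
      moreover have "s/2 \<le> x" using x by auto
      ultimately have "(s/2) * c1^(m-1) \<le> x * (x^2+c1)^(m-1)"
        using s c1pos by (intro mult_mono) auto
      then have "1 \<le> K * (x * (x^2+c1)^(m-1))"
        unfolding K_def using s c1pos by (simp add: field_simps)
      then show ?thesis unfolding H'_def using Qe
        by (simp add: divide_right_mono)
    qed
    finally show ?thesis .
  qed
  have int2': "integrandI m c1 integrable_on {s/2..<s}"
    by (rule measurable_bounded_by_integrable_imp_integrable_real[OF meas KH'int bound]) auto
  have int2: "integrandI m c1 integrable_on {s/2..s}"
    unfolding eqs integrable_on_insert_iff by (rule int2')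
  have int1: "integrandI m c1 integrable_on {0..s/2}"
    by (rule integrable_continuous_interval, rule continuous_on_subset[OF g_cont[OF m2 c1pos c1lt]])
       (use s in \<open>auto simp: s_def\<close>, smt (verit) s s_def)
  show ?thesis using Henstock_Kurzweil_Integration.integrable_combine[OF _ _ int1 int2] s unfolding s_def by auto
qed

end

context
  fixes m :: nat and c1 :: real
  assumes m2: "m \<ge> 2" and c1pos: "0 < c1" and c1lt: "c1 < 1"
begin

lemma g_pos: assumes "0 \<le> a" "a < sqrt (1-c1)" shows "0 < integrandI m c1 a"
proof -
  have "0 < 1 - (a^2 + c1)^m" using Q_pos[OF m2 c1pos c1lt assms] .
  moreover have "0 < a^2 + c1" using c1pos by (simp add: add_nonneg_pos)
  ultimately show ?thesis unfolding integrandI_def by simp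
qed

lemma g_int_sub: assumes "0 \<le> a" "a \<le> b" "b \<le> sqrt (1-c1)"
  shows "integrandI m c1 integrable_on {a..b}"
  by (rule integrable_subinterval_real[OF g_integrable[OF m2 c1pos c1lt]]) (use assms in auto)

lemma I_cont: "continuous_on {0..sqrt (1-c1)} (Ifun m c1)"
  unfolding Ifun_def[abs_def] by (rule indefinite_integral_continuous_1'[OF g_integrable[OF m2 c1pos c1lt]])

lemma I_s: "Ifun m c1 (sqrt (1-c1)) = 0"
  unfolding Ifun_def by simp

lemma I_deriv: assumes "0 < a" "a < sqrt (1-c1)"
  shows "(Ifun m c1 has_real_derivative - integrandI m c1 a) (at a)"
proof -
  define s where "s = sqrt (1-c1)"
  define b where "b = (a + s) / 2"
  have ab: "a < b" "b < s" using assms unfolding b_def s_def by auto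
  have "((\<lambda>x. integral {x..b} (integrandI m c1)) has_real_derivative - integrandI m c1 a) (at a within {0..b})"
    by (rule integral_has_real_derivative')
       (rule continuous_on_subset[OF g_cont[OF m2 c1pos c1lt]], use ab assms in \<open>auto simp: s_def\<close>)
  then have d: "((\<lambda>x. integral {x..b} (integrandI m c1) + integral {b..s} (integrandI m c1)) has_real_derivative - integrandI m c1 a) (at a)"
    using at_within_Icc_at[of 0 a b] assms ab by (auto intro!: derivative_eq_intros)
  show ?thesis
  proof (rule has_field_derivative_transform_within_open[OF d, of "{0<..<b}"])
    fix x assume x: "x \<in> {0<..<b}"
    show "integral {x..b} (integrandI m c1) + integral {b..s} (integrandI m c1) = Ifun m c1 x"
      unfolding Ifun_def s_def
      by (rule Henstock_Kurzweil_Integration.integral_combine) (use x ab g_int_sub in \<open>auto simp: s_def\<close>)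
  qed (use assms ab in auto)
qed

lemma I_strict: assumes "0 \<le> x" "x < y" "y \<le> sqrt (1-c1)"
  shows "Ifun m c1 y < Ifun m c1 x"
proof (rule DERIV_neg_imp_decreasing_open[OF assms(2)])
  fix t assume "x < t" "t < y"
  then show "\<exists>d. (Ifun m c1 has_real_derivative d) (at t) \<and> d < 0"
    using I_deriv[of t] g_pos[of t] assms by (intro exI[of _ "- integrandI m c1 t"]) auto
next
  show "continuous_on {x..y} (Ifun m c1)"
    by (rule continuous_on_subset[OF I_cont]) (use assms in auto)
qed

lemma D_pos: "d1 m c1 > 0"
  using I_strict[of 0 "sqrt (1-c1)"] I_s c1lt unfolding d1_def by auto

end

definition hh :: "nat \<Rightarrow> real \<Rightarrow> real \<Rightarrow> real" where
  "hh m c1 y = (THE a. a \<in> {0..sqrt (1-c1)} \<and> Ifun m c1 a = y)"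

context
  fixes m :: nat and c1 :: real
  assumes m2: "m \<ge> 2" and c1pos: "0 < c1" and c1lt: "c1 < 1"
begin

lemma I_inj: assumes "x \<in> {0..sqrt (1-c1)}" "y \<in> {0..sqrt (1-c1)}" "Ifun m c1 x = Ifun m c1 y"
  shows "x = y"
  using I_strict[OF m2 c1pos c1lt, of x y] I_strict[OF m2 c1pos c1lt, of y x] assms
  by (cases x y rule: linorder_cases) auto

lemma I_range: assumes "a \<in> {0..sqrt (1-c1)}" shows "Ifun m c1 a \<in> {0..d1 m c1}"
proof -
  have "Ifun m c1 (sqrt (1-c1)) \<le> Ifun m c1 a"
    using I_strict[OF m2 c1pos c1lt, of a "sqrt (1-c1)"] assms by (cases "a = sqrt (1-c1)") auto
  moreover have "Ifun m c1 a \<le> Ifun m c1 0"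
    using I_strict[OF m2 c1pos c1lt, of 0 a] assms by (cases "a = 0") auto
  ultimately show ?thesis using I_s[OF m2 c1pos c1lt] unfolding d1_def by auto
qed

lemma I_onto: assumes "y \<in> {0..d1 m c1}" shows "\<exists>a\<in>{0..sqrt (1-c1)}. Ifun m c1 a = y"
  using IVT2'[of "Ifun m c1" "sqrt (1-c1)" y 0] I_cont[OF m2 c1pos c1lt] I_s[OF m2 c1pos c1lt] assms
  unfolding d1_def using c1lt by auto

lemma hh_prop: assumes "y \<in> {0..d1 m c1}"
  shows "hh m c1 y \<in> {0..sqrt (1-c1)}" "Ifun m c1 (hh m c1 y) = y"
proof -
  obtain a where a: "a \<in> {0..sqrt (1-c1)}" "Ifun m c1 a = y" using I_onto[OF assms] by blast
  have "hh m c1 y = a" unfolding hh_def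
    by (rule the_equality) (use a I_inj in auto)
  then show "hh m c1 y \<in> {0..sqrt (1-c1)}" "Ifun m c1 (hh m c1 y) = y" using a by auto
qed

lemma hh_I: assumes "a \<in> {0..sqrt (1-c1)}" shows "hh m c1 (Ifun m c1 a) = a"
  using hh_prop[OF I_range[OF assms]] I_inj[OF _ assms] by blast

lemma I_image: "Ifun m c1 ` {0..sqrt (1-c1)} = {0..d1 m c1}"
  using I_range I_onto by blast

lemma hh_cont: "continuous_on {0..d1 m c1} (hh m c1)"
  using continuous_on_inv[OF I_cont[OF m2 c1pos c1lt] compact_Icc, of "hh m c1"] hh_I I_image
  by auto

lemma hh_0: "hh m c1 0 = sqrt (1-c1)"
  using hh_I[of "sqrt (1-c1)"] I_s[OF m2 c1pos c1lt] c1lt by auto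

lemma hh_D: "hh m c1 (d1 m c1) = 0"
  using hh_I[of 0] c1lt unfolding d1_def by auto

lemma hh_open: assumes "y \<in> {0<..<d1 m c1}" shows "hh m c1 y \<in> {0<..<sqrt (1-c1)}"
proof -
  have a: "hh m c1 y \<in> {0..sqrt (1-c1)}" "Ifun m c1 (hh m c1 y) = y" using hh_prop[of y] assms by auto
  have "hh m c1 y \<noteq> 0" using a assms unfolding d1_def by auto
  moreover have "hh m c1 y \<noteq> sqrt (1-c1)" using a assms I_s[OF m2 c1pos c1lt] by auto
  ultimately show ?thesis using a by auto
qed

lemma hh_pos: assumes "y \<in> {0..<d1 m c1}" shows "0 < hh m c1 y"
proof -
  have a: "hh m c1 y \<in> {0..sqrt (1-c1)}" "Ifun m c1 (hh m c1 y) = y" using hh_prop[of y] assms by auto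
  have "hh m c1 y \<noteq> 0" using a assms unfolding d1_def by auto
  then show ?thesis using a by auto
qed

lemma hh_deriv: assumes "y \<in> {0<..<d1 m c1}"
  shows "(hh m c1 has_real_derivative - inverse (integrandI m c1 (hh m c1 y))) (at y)"
proof -
  have h: "hh m c1 y \<in> {0<..<sqrt (1-c1)}" using hh_open[OF assms] .
  have "(hh m c1 has_real_derivative inverse (- integrandI m c1 (hh m c1 y))) (at y)"
  proof (rule DERIV_inverse_function[where a=0 and b="d1 m c1"])
    show "(Ifun m c1 has_real_derivative - integrandI m c1 (hh m c1 y)) (at (hh m c1 y))"
      using I_deriv[OF m2 c1pos c1lt] h by auto
    show "- integrandI m c1 (hh m c1 y) \<noteq> 0" using g_pos[OF m2 c1pos c1lt, of "hh m c1 y"] h by auto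
    show "isCont (hh m c1) y"
      using continuous_on_interior[OF hh_cont, of y] assms by auto
  qed (use assms hh_prop in auto)
  then show ?thesis by (simp add: inverse_minus_eq)
qed

lemma alpha_hat_eq: assumes "\<bar>u - c3\<bar> < d1 m c1"
  shows "(\<exists>!\<alpha>. \<alpha> \<in> {0<..sqrt (1-c1)} \<and> Ifun m c1 \<alpha> = \<bar>u - c3\<bar>)"
    "alpha_hat m c1 c3 u = hh m c1 \<bar>u - c3\<bar>"
proof -
  have y: "\<bar>u - c3\<bar> \<in> {0..<d1 m c1}" using assms by auto
  have a: "hh m c1 \<bar>u - c3\<bar> \<in> {0<..sqrt (1-c1)}" "Ifun m c1 (hh m c1 \<bar>u - c3\<bar>) = \<bar>u - c3\<bar>"
    using hh_prop[of "\<bar>u - c3\<bar>"] hh_pos[OF y] y by auto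
  have u: "\<And>b. b \<in> {0<..sqrt (1-c1)} \<and> Ifun m c1 b = \<bar>u - c3\<bar> \<Longrightarrow> b = hh m c1 \<bar>u - c3\<bar>"
    using I_inj a by auto
  show "\<exists>!\<alpha>. \<alpha> \<in> {0<..sqrt (1-c1)} \<and> Ifun m c1 \<alpha> = \<bar>u - c3\<bar>"
    using a u by blast
  show "alpha_hat m c1 c3 u = hh m c1 \<bar>u - c3\<bar>" unfolding alpha_hat_def
    by (rule the_equality) (use a u in auto)
qed

end

lemma deriv_from_nbhd:
  fixes f f' :: "real \<Rightarrow> real"
  assumes U: "open U" "x \<in> U" and fc: "continuous_on U f"
    and fd: "\<And>y. y \<in> U \<Longrightarrow> y \<noteq> x \<Longrightarrow> (f has_real_derivative f' y) (at y)"
    and f'c: "isCont f' x"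
  shows "(f has_real_derivative f' x) (at x)"
  unfolding has_field_derivative_iff LIM_eq
proof (intro allI impI)
  fix r :: real assume r: "r > 0"
  obtain e where e: "e > 0" "ball x e \<subseteq> U" using U open_contains_ball by blast
  obtain d where d: "d > 0" "\<And>y. dist y x < d \<Longrightarrow> dist (f' y) (f' x) < r"
    using f'c r unfolding continuous_at_eps_delta by blast
  show "\<exists>s>0. \<forall>y. y \<noteq> x \<and> norm (y - x) < s \<longrightarrow> norm ((f y - f x) / (y - x) - f' x) < r"
  proof (intro exI[of _ "min d e"] conjI allI impI)
    show "min d e > 0" using d e by auto
    fix y assume y: "y \<noteq> x \<and> norm (y - x) < min d e"
    define a where "a = min x y"
    define b where "b = max x y"
    have ab: "a < b" using y unfolding a_def b_def by auto
    have sub: "{a..b} \<subseteq> U"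
    proof
      fix t assume "t \<in> {a..b}"
      then have "dist x t < e" using y unfolding a_def b_def dist_real_def by auto
      then show "t \<in> U" using e by auto
    qed
    have "continuous_on {a..b} f" using continuous_on_subset[OF fc sub] .
    moreover have "f differentiable (at t)" if "a < t" "t < b" for t
    proof -
      have "t \<in> U" "t \<noteq> x" using sub that unfolding a_def b_def by auto
      then show ?thesis using fd real_differentiable_def by blast
    qed
    ultimately obtain l z where z: "a < z" "z < b" "DERIV f z :> l" "f b - f a = (b - a) * l"
      using MVT[OF ab] by metis
    have zU: "z \<in> U" "z \<noteq> x" using sub z unfolding a_def b_def by auto
    have l: "l = f' z" using DERIV_unique[OF z(3) fd[OF zU]] .
    have q: "(f y - f x) / (y - x) = l"
      using z(4) y unfolding a_def b_def by (cases "x < y") (auto simp: field_simps)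
    have "dist z x < d" using z y unfolding a_def b_def dist_real_def by auto
    then show "norm ((f y - f x) / (y - x) - f' x) < r"
      using d(2)[of z] q l by (simp add: dist_real_def)
  qed
qed


definition FF :: "nat \<Rightarrow> real \<Rightarrow> real \<Rightarrow> real" where
  "FF m c1 a = (1 - (a^2 + c1)^m) powr ((2 * real m - 1) / (2 * real m)) / (a^2 + c1) powr ((2 * real m - 1) / 2)"

definition GG :: "nat \<Rightarrow> real \<Rightarrow> real \<Rightarrow> real" where
  "GG m c1 a = - (2 * real m - 1) * a * ((1 - (a^2 + c1)^m) powr ((real m - 1) / real m) / (a^2 + c1)^m
       + (1 - (a^2 + c1)^m) powr ((2 * real m - 1) / real m) / (a^2 + c1)^(2*m))"

lemma FF_prod_alg:
  fixes Q R e1 e2 dQ dR :: real and m :: nat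
  assumes Q: "Q > 0" and R: "R > 0" and m: "m \<ge> 2"
    and e1: "e1 = (2 * real m - 1) / (2 * real m)" and e2: "e2 = (2 * real m - 1) / 2"
    and dQ: "dQ = - (real m * R^(m-1) * (2*a))" and dR: "dR = 2 * a"
  shows "Q powr e1 / R powr e2 *
     ((e1 * Q powr (e1 - 1) * dQ * R powr e2 - Q powr e1 * (e2 * R powr (e2 - 1) * dR)) / (R powr e2 * R powr e2))
   = - (2 * real m - 1) * a * (Q powr ((real m - 1) / real m) / R^m + Q powr ((2 * real m - 1) / real m) / R^(2*m))"
proof -
  define P where "P = Q powr e1"
  define T where "T = R powr e2"
  have Pp: "P > 0" and Tp: "T > 0" using Q R unfolding P_def T_def by auto
  have hq: "Q powr (e1 - 1) = P / Q" unfolding P_def using Q by (simp add: powr_diff)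
  have hr: "R powr (e2 - 1) = T / R" unfolding T_def using R by (simp add: powr_diff)
  have hP2: "P * P = Q powr ((2 * real m - 1) / real m)"
  proof -
    have "P * P = Q powr (e1 + e1)" unfolding P_def by (simp only: powr_add)
    moreover have "e1 + e1 = (2 * real m - 1) / real m" unfolding e1 using m by (simp add: field_simps)
    ultimately show ?thesis by simp
  qed
  have hPQ: "P * P / Q = Q powr ((real m - 1) / real m)"
  proof -
    have "Q powr ((2 * real m - 1) / real m) / Q = Q powr ((2 * real m - 1) / real m - 1)"
      using Q by (simp add: powr_diff)
    moreover have "(2 * real m - 1) / real m - 1 = (real m - 1) / real m" using m by (simp add: field_simps)
    ultimately show ?thesis unfolding hP2 by simp
  qed
  have hT2: "T * T = R^(m-1) * R^m"
  proof -
    have "T * T = R powr (e2 + e2)" unfolding T_def by (simp only: powr_add)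
    moreover have "e2 + e2 = real (2*m-1)" unfolding e2 using m by (simp add: of_nat_diff)
    ultimately have "T * T = R powr (real (2*m-1))" by simp
    also have "\<dots> = R^(2*m-1)" using R by (simp add: powr_realpow)
    also have "\<dots> = R^(m-1) * R^m" using m by (simp add: power_add[symmetric] mult_2)
    finally show ?thesis .
  qed
  have R2m: "R^(2*m) = R^m * R^m" by (simp add: power_add[symmetric] mult_2)
  have Rm: "R^m = R^(m-1) * R" using m by (metis One_nat_def Suc_pred less_le_trans not_numeral_le_zero power_Suc2 zero_less_iff_neq_zero numeral_2_eq_2 less_2_cases_iff not_le)
  have e1m: "e1 * (2 * real m) = 2 * real m - 1" unfolding e1 using m by simp
  have e2m: "e2 * 2 = 2 * real m - 1" unfolding e2 by simp
  have lhs: "Q powr e1 / R powr e2 *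
     ((e1 * Q powr (e1 - 1) * dQ * R powr e2 - Q powr e1 * (e2 * R powr (e2 - 1) * dR)) / (R powr e2 * R powr e2))
     = (e1 * (P * P / Q) * dQ - e2 * (P * P) * dR / R) / (T * T)"
    apply (simp only: hq hr P_def[symmetric] T_def[symmetric])
    using Q R Pp Tp by (simp add: field_simps)
  show ?thesis unfolding lhs unfolding hPQ[symmetric] hP2[symmetric] hT2 R2m dQ dR
    using Q R Pp Tp Rm m by (simp add: field_simps e1 e2)
qed


context
  fixes m :: nat and c1 :: real
  assumes m2: "m \<ge> 2" and c1pos: "0 < c1" and c1lt: "c1 < 1"
begin

lemma R_pos': "0 < a^2 + c1" using c1pos by (simp add: add_nonneg_pos)

lemma FF_inv: assumes "0 \<le> a" "a < sqrt (1-c1)" shows "FF m c1 a = inverse (integrandI m c1 a)"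
  unfolding FF_def integrandI_def by (simp add: inverse_divide)

lemma FF_cont: "continuous_on {0..sqrt (1-c1)} (FF m c1)"
proof -
  have a: "\<forall>x\<in>{0..sqrt (1-c1)}. 0 \<le> 1 - (x^2 + c1)^m \<and> (1 - (x^2 + c1)^m = 0 \<longrightarrow> 0 < (2 * real m - 1) / (2 * real m))"
    using Q_nonneg[OF m2 c1pos c1lt] m2 by auto
  have b: "\<forall>x\<in>{0..sqrt (1-c1)}. (x^2 + c1) \<noteq> 0"
  proof (intro ballI) fix x show "x^2 + c1 \<noteq> 0" using R_pos'[of x] by simp qed
  have c: "\<forall>x\<in>{0..sqrt (1-c1)}. (x^2 + c1) powr ((2 * real m - 1) / 2) \<noteq> 0"
  proof (intro ballI) fix x show "(x^2 + c1) powr ((2 * real m - 1) / 2) \<noteq> 0" using R_pos'[of x] by simp qed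
  show ?thesis unfolding FF_def[abs_def]
    by (intro continuous_on_divide continuous_on_powr' continuous_on_powr continuous_intros a b c)
qed

lemma FF_s: "FF m c1 (sqrt (1-c1)) = 0"
  unfolding FF_def using Q_s[OF m2 c1pos c1lt] m2 by simp

lemma GG_cont: "continuous_on {0..sqrt (1-c1)} (GG m c1)"
proof -
  have a: "\<forall>x\<in>{0..sqrt (1-c1)}. 0 \<le> 1 - (x^2 + c1)^m \<and> (1 - (x^2 + c1)^m = 0 \<longrightarrow> 0 < (2 * real m - 1) / real m)"
    using Q_nonneg[OF m2 c1pos c1lt] m2 by auto
  have a2: "\<forall>x\<in>{0..sqrt (1-c1)}. 0 \<le> 1 - (x^2 + c1)^m \<and> (1 - (x^2 + c1)^m = 0 \<longrightarrow> 0 < (real m - 1) / real m)"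
    using Q_nonneg[OF m2 c1pos c1lt] m2 by auto
  have b: "\<forall>x\<in>{0..sqrt (1-c1)}. (x^2 + c1)^k \<noteq> 0" for k
  proof (intro ballI) fix x show "(x^2 + c1)^k \<noteq> 0" using R_pos'[of x] by simp qed
  show ?thesis unfolding GG_def[abs_def]
    by (intro continuous_on_divide continuous_on_powr' continuous_intros a a2 b)
qed

lemma GG_s: "GG m c1 (sqrt (1-c1)) = 0"
  unfolding GG_def using Q_s[OF m2 c1pos c1lt] m2 by simp

lemma FF_deriv: assumes "0 < a" "a < sqrt (1-c1)"
  shows "\<exists>FD. (FF m c1 has_real_derivative FD) (at a) \<and> FF m c1 a * FD = GG m c1 a"
proof -
  define Q where "Q = 1 - (a^2 + c1)^m"
  define R where "R = a^2 + c1"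
  define e1 where "e1 = (2 * real m - 1) / (2 * real m)"
  define e2 where "e2 = (2 * real m - 1) / 2"
  have Qp: "Q > 0" unfolding Q_def using Q_pos[OF m2 c1pos c1lt] assms by auto
  have Rp: "R > 0" unfolding R_def using R_pos' .
  have dQ: "((\<lambda>a. 1 - (a^2 + c1)^m) has_real_derivative - (real m * R^(m-1) * (2*a))) (at a)"
    unfolding R_def by (auto intro!: derivative_eq_intros simp: power2_eq_square)
  have dR: "((\<lambda>a. a^2 + c1) has_real_derivative 2 * a) (at a)"
    by (auto intro!: derivative_eq_intros simp: power2_eq_square)
  have d1: "((\<lambda>a. (1 - (a^2 + c1)^m) powr e1) has_real_derivative e1 * Q powr (e1 - of_nat 1) * (- (real m * R^(m-1) * (2*a)))) (at a)"
    using DERIV_fun_powr[OF dQ, of e1] Qp unfolding Q_def by simp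
  have d2: "((\<lambda>a. (a^2 + c1) powr e2) has_real_derivative e2 * R powr (e2 - of_nat 1) * (2 * a)) (at a)"
    using DERIV_fun_powr[OF dR, of e2] Rp unfolding R_def by simp
  have d: "(FF m c1 has_real_derivative
      (e1 * Q powr (e1 - 1) * (- (real m * R^(m-1) * (2*a))) * R powr e2 - Q powr e1 * (e2 * R powr (e2 - 1) * (2 * a))) / (R powr e2 * R powr e2)) (at a)"
  proof -
    have "((\<lambda>a. (1 - (a^2 + c1)^m) powr e1 / (a^2 + c1) powr e2) has_real_derivative
      (e1 * Q powr (e1 - 1) * (- (real m * R^(m-1) * (2*a))) * R powr e2 - Q powr e1 * (e2 * R powr (e2 - 1) * (2 * a))) / (R powr e2 * R powr e2)) (at a)"
      using DERIV_divide[OF d1 d2] Rp unfolding Q_def R_def by simp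
    then show ?thesis unfolding FF_def[abs_def] e1_def e2_def .
  qed
  have "FF m c1 a * ((e1 * Q powr (e1 - 1) * (- (real m * R^(m-1) * (2*a))) * R powr e2 - Q powr e1 * (e2 * R powr (e2 - 1) * (2 * a))) / (R powr e2 * R powr e2)) = GG m c1 a"
  proof -
    have "FF m c1 a = Q powr e1 / R powr e2" unfolding FF_def Q_def R_def e1_def e2_def ..
    moreover have "GG m c1 a = - (2 * real m - 1) * a * (Q powr ((real m - 1) / real m) / R^m + Q powr ((2 * real m - 1) / real m) / R^(2*m))"
      unfolding GG_def Q_def R_def ..
    ultimately show ?thesis using FF_prod_alg[OF Qp Rp m2 e1_def e2_def refl refl] by simp
  qed
  with d show ?thesis by blast
qed

end

definition AA :: "nat \<Rightarrow> real \<Rightarrow> real \<Rightarrow> real \<Rightarrow> real" where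
  "AA m c1 c3 u = hh m c1 \<bar>u - c3\<bar>"
definition a1f :: "nat \<Rightarrow> real \<Rightarrow> real \<Rightarrow> real \<Rightarrow> real" where
  "a1f m c1 c3 u = - sgn (u - c3) * FF m c1 (AA m c1 c3 u)"
definition a2f :: "nat \<Rightarrow> real \<Rightarrow> real \<Rightarrow> real \<Rightarrow> real" where
  "a2f m c1 c3 u = GG m c1 (AA m c1 c3 u)"

context
  fixes m :: nat and c1 c3 :: real
  assumes m2: "m \<ge> 2" and c1pos: "0 < c1" and c1lt: "c1 < 1"
begin

abbreviation "UU \<equiv> {c3 - d1 m c1<..<c3 + d1 m c1}"

lemma UU_abs: "u \<in> UU \<longleftrightarrow> \<bar>u - c3\<bar> < d1 m c1" by auto

lemma AA_cont: "continuous_on UU (AA m c1 c3)"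
proof -
  have "continuous_on UU (\<lambda>u. hh m c1 \<bar>u - c3\<bar>)"
    by (rule continuous_on_compose2[OF hh_cont[OF m2 c1pos c1lt]]) (auto intro!: continuous_intros)
  then show ?thesis unfolding AA_def[abs_def] .
qed

lemma AA_range: assumes "u \<in> UU" shows "AA m c1 c3 u \<in> {0<..sqrt (1-c1)}"
  using hh_prop[OF m2 c1pos c1lt, of "\<bar>u - c3\<bar>"] hh_pos[OF m2 c1pos c1lt, of "\<bar>u - c3\<bar>"] assms
  unfolding AA_def by auto

lemma AA_range': assumes "u \<in> UU" "u \<noteq> c3" shows "AA m c1 c3 u \<in> {0<..<sqrt (1-c1)}"
  using hh_open[OF m2 c1pos c1lt, of "\<bar>u - c3\<bar>"] assms unfolding AA_def by auto

lemma AA_c3: "AA m c1 c3 c3 = sqrt (1-c1)"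
  unfolding AA_def using hh_0[OF m2 c1pos c1lt] by simp

lemma AA_alpha: assumes "u \<in> UU" shows "alpha_hat m c1 c3 u = AA m c1 c3 u"
  using alpha_hat_eq[OF m2 c1pos c1lt, of u c3] assms unfolding AA_def by auto

lemma hh_deriv': assumes "y \<in> {0<..<d1 m c1}"
  shows "(hh m c1 has_real_derivative - FF m c1 (hh m c1 y)) (at y)"
  using hh_deriv[OF m2 c1pos c1lt assms] FF_inv[OF m2 c1pos c1lt, of "hh m c1 y"]
    hh_open[OF m2 c1pos c1lt assms] by auto

lemma AA_deriv_ne: assumes u: "u \<in> UU" "u \<noteq> c3"
  shows "(AA m c1 c3 has_real_derivative a1f m c1 c3 u) (at u)"
proof (cases "u > c3")
  case True
  have "((\<lambda>u. hh m c1 (u - c3)) has_real_derivative - FF m c1 (hh m c1 (u - c3)) * 1) (at u)"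
    by (rule DERIV_chain2[OF hh_deriv']) (use u True in \<open>auto intro!: derivative_eq_intros\<close>)
  then have "(AA m c1 c3 has_real_derivative - FF m c1 (hh m c1 (u - c3)) * 1) (at u)"
  proof (rule has_field_derivative_transform_within_open[of _ _ _ "{c3<..}"])
    show "hh m c1 (x - c3) = AA m c1 c3 x" if "x \<in> {c3<..}" for x using that unfolding AA_def by auto
  qed (use True in auto)
  then show ?thesis using True by (simp add: a1f_def AA_def)
next
  case False
  then have F: "u < c3" using u by auto
  have "((\<lambda>u. hh m c1 (c3 - u)) has_real_derivative - FF m c1 (hh m c1 (c3 - u)) * (-1)) (at u)"
    by (rule DERIV_chain2[OF hh_deriv']) (use u F in \<open>auto intro!: derivative_eq_intros\<close>)
  then have "(AA m c1 c3 has_real_derivative - FF m c1 (hh m c1 (c3 - u)) * (-1)) (at u)"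
  proof (rule has_field_derivative_transform_within_open[of _ _ _ "{..<c3}"])
    show "hh m c1 (c3 - x) = AA m c1 c3 x" if "x \<in> {..<c3}" for x using that unfolding AA_def by auto
  qed (use F in auto)
  then show ?thesis using F by (simp add: a1f_def AA_def)
qed

lemma AA_range_cl: assumes "u \<in> UU" shows "AA m c1 c3 u \<in> {0..sqrt (1-c1)}"
  using AA_range[OF assms] by auto

lemma FF_nonneg: "0 \<le> FF m c1 a" unfolding FF_def by simp

lemma FFAA_cont: "continuous_on UU (\<lambda>u. FF m c1 (AA m c1 c3 u))"
  by (rule continuous_on_compose2[OF FF_cont[OF m2 c1pos c1lt] AA_cont]) (use AA_range_cl in auto)

lemma a2_cont: "continuous_on UU (a2f m c1 c3)"
  unfolding a2f_def[abs_def]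
  by (rule continuous_on_compose2[OF GG_cont[OF m2 c1pos c1lt] AA_cont]) (use AA_range_cl in auto)

lemma c3_UU: "c3 \<in> UU" using D_pos[OF m2 c1pos c1lt] by auto

lemma a1_isCont_c3: "isCont (a1f m c1 c3) c3"
proof -
  have "isCont (\<lambda>u. FF m c1 (AA m c1 c3 u)) c3"
    using FFAA_cont c3_UU by (simp add: continuous_on_eq_continuous_at)
  then have t: "((\<lambda>u. FF m c1 (AA m c1 c3 u)) \<longlongrightarrow> 0) (at c3)"
    using FF_s[OF m2 c1pos c1lt] AA_c3 by (simp add: isCont_def)
  have "(a1f m c1 c3 \<longlongrightarrow> 0) (at c3)"
  proof (rule Lim_null_comparison[OF _ t])
    show "\<forall>\<^sub>F x in at c3. norm (a1f m c1 c3 x) \<le> FF m c1 (AA m c1 c3 x)"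
      unfolding a1f_def using FF_nonneg by (intro always_eventually allI) (auto simp: abs_mult sgn_if)
  qed
  then show ?thesis unfolding isCont_def a1f_def by simp
qed

lemma AA_deriv: assumes "u \<in> UU" shows "(AA m c1 c3 has_real_derivative a1f m c1 c3 u) (at u)"
proof (cases "u = c3")
  case True
  show ?thesis unfolding True
    by (rule deriv_from_nbhd[OF _ c3_UU AA_cont AA_deriv_ne a1_isCont_c3]) auto
qed (use AA_deriv_ne assms in auto)

lemma a1_deriv_ne: assumes u: "u \<in> UU" "u \<noteq> c3"
  shows "(a1f m c1 c3 has_real_derivative a2f m c1 c3 u) (at u)"
proof -
  obtain FD where FD: "(FF m c1 has_real_derivative FD) (at (AA m c1 c3 u))"
      "FF m c1 (AA m c1 c3 u) * FD = GG m c1 (AA m c1 c3 u)"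
    using FF_deriv[OF m2 c1pos c1lt, of "AA m c1 c3 u"] AA_range'[OF u] by auto
  have d: "((\<lambda>u. FF m c1 (AA m c1 c3 u)) has_real_derivative FD * a1f m c1 c3 u) (at u)"
    by (rule DERIV_chain2[OF FD(1) AA_deriv[OF u(1)]])
  show ?thesis
  proof (cases "u > c3")
    case True
    have "((\<lambda>u. - FF m c1 (AA m c1 c3 u)) has_real_derivative - (FD * a1f m c1 c3 u)) (at u)"
      using d by (rule derivative_intros)
    then have "(a1f m c1 c3 has_real_derivative - (FD * a1f m c1 c3 u)) (at u)"
    proof (rule has_field_derivative_transform_within_open[of _ _ _ "{c3<..}"])
      show "- FF m c1 (AA m c1 c3 x) = a1f m c1 c3 x" if "x \<in> {c3<..}" for x
        using that unfolding a1f_def by auto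
    qed (use True in auto)
    then show ?thesis using True FD(2) by (simp add: a1f_def a2f_def mult.commute)
  next
    case False
    then have F: "u < c3" using u by auto
    have "(a1f m c1 c3 has_real_derivative FD * a1f m c1 c3 u) (at u)"
    proof (rule has_field_derivative_transform_within_open[OF d, of "{..<c3}"])
      show "FF m c1 (AA m c1 c3 x) = a1f m c1 c3 x" if "x \<in> {..<c3}" for x
        using that unfolding a1f_def by auto
    qed (use F in auto)
    then show ?thesis using F FD(2) by (simp add: a1f_def a2f_def mult.commute)
  qed
qed

lemma a1_cont: "continuous_on UU (a1f m c1 c3)"
proof (rule continuous_at_imp_continuous_on, intro ballI)
  fix u assume u: "u \<in> UU"
  show "isCont (a1f m c1 c3) u"
  proof (cases "u = c3")
    case True then show ?thesis using a1_isCont_c3 by simp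
  next
    case False show ?thesis by (rule DERIV_isCont[OF a1_deriv_ne[OF u False]])
  qed
qed

lemma a1_deriv: assumes "u \<in> UU" shows "(a1f m c1 c3 has_real_derivative a2f m c1 c3 u) (at u)"
proof (cases "u = c3")
  case True
  have "isCont (a2f m c1 c3) c3" using a2_cont c3_UU by (simp add: continuous_on_eq_continuous_at)
  then show ?thesis unfolding True
    by (intro deriv_from_nbhd[OF _ c3_UU a1_cont a1_deriv_ne]) auto
qed (use a1_deriv_ne assms in auto)

lemma a1_c3: "a1f m c1 c3 c3 = 0" unfolding a1f_def by simp
lemma a2_c3: "a2f m c1 c3 c3 = 0" unfolding a2f_def AA_c3 using GG_s[OF m2 c1pos c1lt] .

end

context
  fixes m :: nat and c1 c3 :: real
  assumes m2: "m \<ge> 2" and c1pos: "0 < c1" and c1lt: "c1 < 1"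
begin

lemma ev_right: "eventually (\<lambda>u. u \<in> UU m c1 c3 \<and> u < c3) (at_right (c3 - d1 m c1))"
  unfolding eventually_at_right_field using D_pos[OF m2 c1pos c1lt]
  by (intro exI[of _ c3]) auto

lemma ev_left: "eventually (\<lambda>u. u \<in> UU m c1 c3 \<and> u > c3) (at_left (c3 + d1 m c1))"
  unfolding eventually_at_left_field using D_pos[OF m2 c1pos c1lt]
  by (intro exI[of _ c3]) auto

lemma AA_lim_gen:
  assumes F: "eventually (\<lambda>u. u \<in> UU m c1 c3) F" and t: "((\<lambda>u. \<bar>u - c3\<bar>) \<longlongrightarrow> d1 m c1) F"
  shows "(AA m c1 c3 \<longlongrightarrow> 0) F"
proof -
  have "((\<lambda>u. hh m c1 \<bar>u - c3\<bar>) \<longlongrightarrow> hh m c1 (d1 m c1)) F"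
    by (rule continuous_on_tendsto_compose[OF hh_cont[OF m2 c1pos c1lt] t])
       (use D_pos[OF m2 c1pos c1lt] F in \<open>auto elim!: eventually_mono\<close>)
  then show ?thesis using hh_D[OF m2 c1pos c1lt] unfolding AA_def[abs_def] by simp
qed

lemma FFAA_lim_gen:
  assumes F: "eventually (\<lambda>u. u \<in> UU m c1 c3) F" and t: "((\<lambda>u. \<bar>u - c3\<bar>) \<longlongrightarrow> d1 m c1) F"
  shows "((\<lambda>u. FF m c1 (AA m c1 c3 u)) \<longlongrightarrow> FF m c1 0) F"
  by (rule continuous_on_tendsto_compose[OF FF_cont[OF m2 c1pos c1lt] AA_lim_gen[OF F t]])
     (use F AA_range_cl[OF m2 c1pos c1lt] c1lt in \<open>auto elim!: eventually_mono\<close>)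

lemma tr: "((\<lambda>u. \<bar>u - c3\<bar>) \<longlongrightarrow> d1 m c1) (at_right (c3 - d1 m c1))"
proof -
  have "((\<lambda>u. \<bar>u - c3\<bar>) \<longlongrightarrow> \<bar>(c3 - d1 m c1) - c3\<bar>) (at_right (c3 - d1 m c1))"
    by (intro tendsto_intros)
  then show ?thesis using D_pos[OF m2 c1pos c1lt] by simp
qed

lemma tl: "((\<lambda>u. \<bar>u - c3\<bar>) \<longlongrightarrow> d1 m c1) (at_left (c3 + d1 m c1))"
proof -
  have "((\<lambda>u. \<bar>u - c3\<bar>) \<longlongrightarrow> \<bar>(c3 + d1 m c1) - c3\<bar>) (at_left (c3 + d1 m c1))"
    by (intro tendsto_intros)
  then show ?thesis using D_pos[OF m2 c1pos c1lt] by simp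
qed

lemma evR: "eventually (\<lambda>u. u \<in> UU m c1 c3) (at_right (c3 - d1 m c1))"
  using ev_right by (auto elim: eventually_mono)
lemma evL: "eventually (\<lambda>u. u \<in> UU m c1 c3) (at_left (c3 + d1 m c1))"
  using ev_left by (auto elim: eventually_mono)

lemma alpha_lim_right: "(alpha_hat m c1 c3 \<longlongrightarrow> 0) (at_right (c3 - d1 m c1))"
proof (rule Lim_transform_eventually[OF AA_lim_gen[OF evR tr]])
  show "\<forall>\<^sub>F x in at_right (c3 - d1 m c1). AA m c1 c3 x = alpha_hat m c1 c3 x"
    using evR by eventually_elim (use AA_alpha[OF m2 c1pos c1lt] in auto)
qed

lemma alpha_lim_left: "(alpha_hat m c1 c3 \<longlongrightarrow> 0) (at_left (c3 + d1 m c1))"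
proof (rule Lim_transform_eventually[OF AA_lim_gen[OF evL tl]])
  show "\<forall>\<^sub>F x in at_left (c3 + d1 m c1). AA m c1 c3 x = alpha_hat m c1 c3 x"
    using evL by eventually_elim (use AA_alpha[OF m2 c1pos c1lt] in auto)
qed

lemma a1_lim_right: "(a1f m c1 c3 \<longlongrightarrow> FF m c1 0) (at_right (c3 - d1 m c1))"
proof (rule Lim_transform_eventually[OF FFAA_lim_gen[OF evR tr]])
  show "\<forall>\<^sub>F x in at_right (c3 - d1 m c1). FF m c1 (AA m c1 c3 x) = a1f m c1 c3 x"
    using ev_right by eventually_elim (auto simp: a1f_def)
qed

lemma a1_lim_left: "(a1f m c1 c3 \<longlongrightarrow> - FF m c1 0) (at_left (c3 + d1 m c1))"
proof (rule Lim_transform_eventually[OF tendsto_minus[OF FFAA_lim_gen[OF evL tl]]])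
  show "\<forall>\<^sub>F x in at_left (c3 + d1 m c1). - FF m c1 (AA m c1 c3 x) = a1f m c1 c3 x"
    using ev_left by eventually_elim (auto simp: a1f_def)
qed

lemma FF_0: "FF m c1 0 = (1 - c1 ^ m) powr ((2 * real m - 1) / (2 * real m)) / c1 powr ((2 * real m - 1) / 2)"
  unfolding FF_def by simp

end

definition E1 :: "real^3" where "E1 = vector [1, 0, 0]"
definition E2 :: "real^3" where "E2 = vector [0, 1, 0]"
definition E3 :: "real^3" where "E3 = vector [0, 0, 1]"

lemma vec3_decomp: "vector [a, b, c] = a *\<^sub>R E1 + b *\<^sub>R E2 + c *\<^sub>R E3"
  unfolding E1_def E2_def E3_def by (simp add: vec_eq_iff forall_3)

lemma has_derivative_vector3:
  assumes "(a has_derivative a') F" "(b has_derivative b') F" "(c has_derivative c') F"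
  shows "((\<lambda>x. vector [a x, b x, c x] :: real^3) has_derivative (\<lambda>h. vector [a' h, b' h, c' h])) F"
proof -
  have l: "bounded_linear (\<lambda>t::real. t *\<^sub>R E)" for E :: "real^3" by (rule bounded_linear_scaleR_left)
  have "((\<lambda>x. a x *\<^sub>R E1 + b x *\<^sub>R E2 + c x *\<^sub>R E3) has_derivative (\<lambda>h. a' h *\<^sub>R E1 + b' h *\<^sub>R E2 + c' h *\<^sub>R E3)) F"
    by (intro has_derivative_add bounded_linear.has_derivative[OF l] assms)
  then show ?thesis unfolding vec3_decomp .
qed

lemma continuous_on_vector3:
  assumes "continuous_on S a" "continuous_on S b" "continuous_on S c"
  shows "continuous_on S (\<lambda>x. vector [a x, b x, c x] :: real^3)"
  unfolding vec3_decomp by (intro continuous_intros assms)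

lemma deriv_fst:
  assumes "(f has_real_derivative f') (at u)"
  shows "((\<lambda>p. f (fst p)) has_derivative (\<lambda>h. f' * fst h)) (at (u, v))"
  using DERIV_compose_FDERIV[where f=f and g=fst and x="(u,v)" and s=UNIV and g'=fst] assms
  by (auto intro: has_derivative_fst[OF has_derivative_ident] simp: mult.commute)

lemma deriv_prod:
  assumes "(f has_real_derivative f') (at u)" "(g has_real_derivative g') (at v)"
  shows "((\<lambda>p. f (fst p) * g (snd p)) has_derivative (\<lambda>h. f' * fst h * g v + f u * (g' * snd h))) (at (u, v))"
proof -
  have a: "((\<lambda>p. f (fst p)) has_derivative (\<lambda>h. f' * fst h)) (at (u, v))" by (rule deriv_fst[OF assms(1)])
  have b: "((\<lambda>p. g (snd p)) has_derivative (\<lambda>h. g' * snd h)) (at (u, v))"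
    using DERIV_compose_FDERIV[where f=g and g=snd and x="(u,v)" and s=UNIV and g'=snd] assms(2)
    by (auto intro: has_derivative_snd[OF has_derivative_ident] simp: mult.commute)
  from has_derivative_mult[OF a b] show ?thesis by (simp add: algebra_simps)
qed

lemma bl2: "bounded_linear (\<lambda>h::real\<times>real. fst h *\<^sub>R V1 + snd h *\<^sub>R (V2::real^3))"
  by (intro bounded_linear_add bounded_linear_compose[OF bounded_linear_scaleR_left] bounded_linear_fst bounded_linear_snd)

lemma bl2_apply: "blinfun_apply (Blinfun (\<lambda>h::real\<times>real. fst h *\<^sub>R V1 + snd h *\<^sub>R (V2::real^3))) h = fst h *\<^sub>R V1 + snd h *\<^sub>R V2"
  using bounded_linear_Blinfun_apply[OF bl2] by simp

lemma Basis_real2: "(Basis :: (real \<times> real) set) = {(1,0), (0,1)}"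
  by (auto simp: Basis_prod_def)

lemma Phi_deriv: "GDERIV (Phi m) x :> vector [2 * real m * ((x$1)^2 + (x$2)^2)^(m-1) * x$1,
      2 * real m * ((x$1)^2 + (x$2)^2)^(m-1) * x$2, 2 * real m * (x$3)^(2*m-1)]"
proof -
  have d: "(Phi m has_derivative (\<lambda>h. real m * ((x$1)^2 + (x$2)^2)^(m-1) * (2 * x$1 * h$1 + 2 * x$2 * h$2)
       + real (2*m) * (x$3)^(2*m-1) * h$3)) (at x)"
    unfolding Phi_def[abs_def]
    by (auto intro!: derivative_eq_intros bounded_linear.has_derivative[OF bounded_linear_vec_nth]
        simp: power2_eq_square algebra_simps)
  show ?thesis unfolding gderiv_def
    by (rule has_derivative_eq_rhs[OF d]) (auto simp: inner_vec_def sum_3 algebra_simps fun_eq_iff)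
qed


definition rhoF :: "nat \<Rightarrow> real \<Rightarrow> real \<Rightarrow> real \<Rightarrow> real" where
  "rhoF m c1 c3 u = sqrt ((AA m c1 c3 u)^2 + c1)"
definition zF :: "nat \<Rightarrow> real \<Rightarrow> real \<Rightarrow> real \<Rightarrow> real" where
  "zF m c1 c3 u = - sgn (u - c3) * (1 - ((AA m c1 c3 u)^2 + c1)^m) powr (1 / (2 * real m))"
definition rhoD :: "nat \<Rightarrow> real \<Rightarrow> real \<Rightarrow> real \<Rightarrow> real" where
  "rhoD m c1 c3 u = AA m c1 c3 u * a1f m c1 c3 u / rhoF m c1 c3 u"
definition zD :: "nat \<Rightarrow> real \<Rightarrow> real \<Rightarrow> real \<Rightarrow> real" where
  "zD m c1 c3 u = - AA m c1 c3 u / rhoF m c1 c3 u"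

lemma z_alg:
  fixes Q R A :: real and m :: nat
  assumes Q: "Q > 0" and R: "R > 0" and m: "m \<ge> 2"
  shows "(1 / (2 * real m)) * Q powr (1 / (2 * real m) - 1) * (real m * R^(m-1) * (2 * A))
     * (Q powr ((2 * real m - 1) / (2 * real m)) / R powr ((2 * real m - 1) / 2)) = A / sqrt R"
proof -
  have q: "Q powr (1 / (2 * real m) - 1) * Q powr ((2 * real m - 1) / (2 * real m)) = 1"
  proof -
    have "Q powr (1 / (2 * real m) - 1) * Q powr ((2 * real m - 1) / (2 * real m))
       = Q powr (1 / (2 * real m) - 1 + (2 * real m - 1) / (2 * real m))" by (simp only: powr_add)
    also have "1 / (2 * real m) - 1 + (2 * real m - 1) / (2 * real m) = 0" using m by (simp add: field_simps)
    finally show ?thesis using Q by simp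
  qed
  have r: "R powr ((2 * real m - 1) / 2) = R^(m-1) * sqrt R"
  proof -
    have e: "(2 * real m - 1) / 2 = real (m - 1) + 1/2" using m by (simp add: of_nat_diff field_simps)
    have "R powr ((2 * real m - 1) / 2) = R powr (real (m - 1) + 1/2)" by (subst e) (rule refl)
    then have "R powr ((2 * real m - 1) / 2) = R powr (real (m-1)) * R powr (1/2)" by (simp only: powr_add)
    then show ?thesis using R by (simp add: powr_realpow powr_half_sqrt)
  qed
  have "(1 / (2 * real m)) * Q powr (1 / (2 * real m) - 1) * (real m * R^(m-1) * (2 * A))
     * (Q powr ((2 * real m - 1) / (2 * real m)) / R powr ((2 * real m - 1) / 2))
     = (1 / (2 * real m)) * (Q powr (1 / (2 * real m) - 1) * Q powr ((2 * real m - 1) / (2 * real m))) * (real m * R^(m-1) * (2 * A))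
       / R powr ((2 * real m - 1) / 2)" by (simp add: field_simps)
  also have "\<dots> = A / sqrt R" unfolding q r using m R by (simp add: field_simps)
  finally show ?thesis .
qed

context
  fixes m :: nat and c1 c3 :: real
  assumes m2: "m \<ge> 2" and c1pos: "0 < c1" and c1lt: "c1 < 1"
begin

lemma rho_pos: "rhoF m c1 c3 u > 0"
  unfolding rhoF_def using c1pos by (simp add: add_nonneg_pos)

lemma rho_deriv: assumes u: "u \<in> UU m c1 c3" shows "(rhoF m c1 c3 has_real_derivative rhoD m c1 c3 u) (at u)"
proof -
  have p: "0 < (AA m c1 c3 u)^2 + c1" using c1pos by (simp add: add_nonneg_pos)
  have d: "((\<lambda>u. (AA m c1 c3 u)^2 + c1) has_real_derivative 2 * AA m c1 c3 u * a1f m c1 c3 u) (at u)"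
    by (auto intro!: derivative_eq_intros AA_deriv[OF m2 c1pos c1lt u])
  have "((\<lambda>u. sqrt ((AA m c1 c3 u)^2 + c1)) has_real_derivative
      inverse (sqrt ((AA m c1 c3 u)^2 + c1)) / 2 * (2 * AA m c1 c3 u * a1f m c1 c3 u)) (at u)"
    by (rule DERIV_chain2[OF DERIV_real_sqrt[OF p] d])
  then show ?thesis unfolding rhoF_def[abs_def] rhoD_def rhoF_def by (simp add: field_simps)
qed

lemma rho_cont: "continuous_on (UU m c1 c3) (rhoF m c1 c3)"
  unfolding rhoF_def[abs_def] by (intro continuous_intros AA_cont[OF m2 c1pos c1lt])

lemma rhoD_cont: "continuous_on (UU m c1 c3) (rhoD m c1 c3)"
  unfolding rhoD_def[abs_def] using rho_pos
  by (intro continuous_intros AA_cont[OF m2 c1pos c1lt] a1_cont[OF m2 c1pos c1lt] rho_cont) (auto simp: less_imp_neq[symmetric])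

lemma zD_cont: "continuous_on (UU m c1 c3) (zD m c1 c3)"
  unfolding zD_def[abs_def] using rho_pos
  by (intro continuous_intros AA_cont[OF m2 c1pos c1lt] rho_cont) (auto simp: less_imp_neq[symmetric])

lemma QA_pos: assumes "u \<in> UU m c1 c3" "u \<noteq> c3" shows "0 < 1 - ((AA m c1 c3 u)^2 + c1)^m"
  using Q_pos[OF m2 c1pos c1lt, of "AA m c1 c3 u"] AA_range'[OF m2 c1pos c1lt assms] by auto

lemma QA_nonneg: assumes "u \<in> UU m c1 c3" shows "0 \<le> 1 - ((AA m c1 c3 u)^2 + c1)^m"
  using Q_nonneg[OF m2 c1pos c1lt, of "AA m c1 c3 u"] AA_range[OF m2 c1pos c1lt assms] by auto

lemma QA_c3: "1 - ((AA m c1 c3 c3)^2 + c1)^m = 0"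
  using Q_s[OF m2 c1pos c1lt] AA_c3[OF m2 c1pos c1lt] by simp

lemma z_deriv_ne: assumes u: "u \<in> UU m c1 c3" "u \<noteq> c3"
  shows "(zF m c1 c3 has_real_derivative zD m c1 c3 u) (at u)"
proof -
  define A where "A = AA m c1 c3 u"
  define Q where "Q = 1 - (A^2 + c1)^m"
  define R where "R = A^2 + c1"
  have Qp: "Q > 0" unfolding Q_def A_def using QA_pos[OF u] .
  have Rp: "R > 0" unfolding R_def using c1pos by (simp add: add_nonneg_pos)
  have rA: "rhoF m c1 c3 u = sqrt R" unfolding rhoF_def R_def A_def ..
  have dQ: "((\<lambda>u. 1 - ((AA m c1 c3 u)^2 + c1)^m) has_real_derivative
      - (real m * R^(m-1) * (2 * A * a1f m c1 c3 u))) (at u)"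
    unfolding R_def A_def by (auto intro!: derivative_eq_intros AA_deriv[OF m2 c1pos c1lt u(1)])
  have dP: "((\<lambda>u. (1 - ((AA m c1 c3 u)^2 + c1)^m) powr (1 / (2 * real m))) has_real_derivative
      (1 / (2 * real m)) * Q powr (1 / (2 * real m) - of_nat 1) * (- (real m * R^(m-1) * (2 * A * a1f m c1 c3 u)))) (at u)"
    using DERIV_fun_powr[OF dQ, of "1 / (2 * real m)"] Qp unfolding Q_def A_def by simp
  have FFA: "FF m c1 A = Q powr ((2 * real m - 1) / (2 * real m)) / R powr ((2 * real m - 1) / 2)"
    unfolding FF_def Q_def R_def ..
  have key: "(1 / (2 * real m)) * Q powr (1 / (2 * real m) - 1) * (real m * R^(m-1) * (2 * A))
     * FF m c1 A = A / sqrt R" unfolding FFA by (rule z_alg[OF Qp Rp m2])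
  define P where "P = (\<lambda>u. (1 - ((AA m c1 c3 u)^2 + c1)^m) powr (1 / (2 * real m)))"
  define DP where "DP = (1 / (2 * real m)) * Q powr (1 / (2 * real m) - of_nat 1) * (- (real m * R^(m-1) * (2 * A * a1f m c1 c3 u)))"
  have dP': "(P has_real_derivative DP) (at u)" using dP unfolding P_def DP_def .
  show ?thesis
  proof (cases "u > c3")
    case True
    have a1: "a1f m c1 c3 u = - FF m c1 A" unfolding a1f_def A_def using True by simp
    have "((\<lambda>u. - P u) has_real_derivative - DP) (at u)"
      using dP' by (rule derivative_intros)
    then have "(zF m c1 c3 has_real_derivative - DP) (at u)"
    proof (rule has_field_derivative_transform_within_open[of _ _ _ "{c3<..}"])
      show "- P x = zF m c1 c3 x" if "x \<in> {c3<..}" for x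
        using that unfolding zF_def P_def by auto
    qed (use True in auto)
    moreover have "- DP = zD m c1 c3 u"
    proof -
      have "DP = (1 / (2 * real m)) * Q powr (1 / (2 * real m) - 1) * (real m * R^(m-1) * (2 * A)) * FF m c1 A"
        unfolding DP_def a1 by (simp add: mult_ac)
      then show ?thesis unfolding zD_def rA A_def[symmetric] using key by simp
    qed
    ultimately show ?thesis by simp
  next
    case False
    then have F: "u < c3" using u by auto
    have a1: "a1f m c1 c3 u = FF m c1 A" unfolding a1f_def A_def using F by simp
    have "(zF m c1 c3 has_real_derivative DP) (at u)"
    proof (rule has_field_derivative_transform_within_open[OF dP', of "{..<c3}"])
      show "P x = zF m c1 c3 x" if "x \<in> {..<c3}" for x
        using that unfolding zF_def P_def by auto
    qed (use F in auto)
    moreover have "DP = zD m c1 c3 u"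
    proof -
      have "DP = - ((1 / (2 * real m)) * Q powr (1 / (2 * real m) - 1) * (real m * R^(m-1) * (2 * A)) * FF m c1 A)"
        unfolding DP_def a1 by (simp add: mult_ac)
      then show ?thesis unfolding zD_def rA A_def[symmetric] using key by simp
    qed
    ultimately show ?thesis by simp
  qed
qed

lemma z_c3: "zF m c1 c3 c3 = 0" unfolding zF_def by simp

lemma z_isCont_c3: "isCont (zF m c1 c3) c3"
proof -
  have c: "continuous_on (UU m c1 c3) (\<lambda>u. (1 - ((AA m c1 c3 u)^2 + c1)^m) powr (1 / (2 * real m)))"
    using QA_nonneg m2 by (intro continuous_on_powr' continuous_intros AA_cont[OF m2 c1pos c1lt]) auto
  have "isCont (\<lambda>u. (1 - ((AA m c1 c3 u)^2 + c1)^m) powr (1 / (2 * real m))) c3"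
    using c c3_UU[OF m2 c1pos c1lt] by (simp add: continuous_on_eq_continuous_at)
  then have t: "((\<lambda>u. (1 - ((AA m c1 c3 u)^2 + c1)^m) powr (1 / (2 * real m))) \<longlongrightarrow> 0) (at c3)"
    using QA_c3 m2 by (simp add: isCont_def)
  have "(zF m c1 c3 \<longlongrightarrow> 0) (at c3)"
  proof (rule Lim_null_comparison[OF _ t])
    show "\<forall>\<^sub>F x in at c3. norm (zF m c1 c3 x) \<le> (1 - ((AA m c1 c3 x)^2 + c1)^m) powr (1 / (2 * real m))"
      unfolding zF_def by (intro always_eventually allI) (auto simp: abs_mult sgn_if)
  qed
  then show ?thesis unfolding isCont_def using z_c3 by simp
qed

lemma z_cont: "continuous_on (UU m c1 c3) (zF m c1 c3)"
proof (rule continuous_at_imp_continuous_on, intro ballI)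
  fix u assume u: "u \<in> UU m c1 c3"
  show "isCont (zF m c1 c3) u"
  proof (cases "u = c3")
    case True then show ?thesis using z_isCont_c3 by simp
  next
    case False show ?thesis by (rule DERIV_isCont[OF z_deriv_ne[OF u False]])
  qed
qed

lemma z_deriv: assumes "u \<in> UU m c1 c3" shows "(zF m c1 c3 has_real_derivative zD m c1 c3 u) (at u)"
proof (cases "u = c3")
  case True
  have "isCont (zD m c1 c3) c3" using zD_cont c3_UU[OF m2 c1pos c1lt] by (simp add: continuous_on_eq_continuous_at)
  then show ?thesis unfolding True
    by (intro deriv_from_nbhd[OF _ c3_UU[OF m2 c1pos c1lt] z_cont z_deriv_ne]) auto
qed (use z_deriv_ne assms in auto)

end

lemma R_e2: fixes R :: real assumes R: "R > 0" and m: "m \<ge> 2"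
  shows "R powr ((2 * real m - 1) / 2) = R^(m-1) * sqrt R"
proof -
  have e: "(2 * real m - 1) / 2 = real (m - 1) + 1/2" using m by (simp add: of_nat_diff field_simps)
  have "R powr ((2 * real m - 1) / 2) = R powr (real (m - 1) + 1/2)" by (subst e) (rule refl)
  then have "R powr ((2 * real m - 1) / 2) = R powr (real (m-1)) * R powr (1/2)" by (simp only: powr_add)
  then show ?thesis using R by (simp add: powr_realpow powr_half_sqrt)
qed

lemma powr_k_pow: fixes Q :: real assumes "Q > 0" "m > 0"
  shows "(Q powr (1 / (2 * real m)))^n = Q powr (real n / (2 * real m))"
proof -
  have "(Q powr (1 / (2 * real m)))^n = (Q powr (1 / (2 * real m))) powr (real n)"
    using assms by (simp add: powr_realpow)
  also have "\<dots> = Q powr (real n / (2 * real m))" by (simp add: powr_powr)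
  finally show ?thesis .
qed

context
  fixes m :: nat and c1 c3 :: real
  assumes m2: "m \<ge> 2" and c1pos: "0 < c1" and c1lt: "c1 < 1"
begin

lemma z_pow_even: assumes u: "u \<in> UU m c1 c3"
  shows "(zF m c1 c3 u)^(2*m) = 1 - ((AA m c1 c3 u)^2 + c1)^m"
proof (cases "u = c3")
  case True
  have "0 < m" using m2 by simp
  then show ?thesis using True z_c3[OF m2 c1pos c1lt] QA_c3[OF m2 c1pos c1lt] by simp
next
  case False
  define Q where "Q = 1 - ((AA m c1 c3 u)^2 + c1)^m"
  have Qp: "Q > 0" unfolding Q_def using QA_pos[OF m2 c1pos c1lt u False] .
  have "(zF m c1 c3 u)^(2*m) = (Q powr (1 / (2 * real m)))^(2*m)"
    unfolding zF_def Q_def[symmetric] using False by (auto simp: sgn_if power_mult_distrib)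
  also have "\<dots> = Q" using powr_k_pow[OF Qp, of m "2*m"] m2 Qp by simp
  finally show ?thesis unfolding Q_def .
qed

lemma z_pow_odd: assumes u: "u \<in> UU m c1 c3"
  shows "(zF m c1 c3 u)^(2*m-1) = ((AA m c1 c3 u)^2 + c1)^(m-1) * rhoF m c1 c3 u * a1f m c1 c3 u"
proof (cases "u = c3")
  case True
  have "2*m-1 \<noteq> 0" using m2 by simp
  then show ?thesis using True z_c3[OF m2 c1pos c1lt] a1_c3[OF m2 c1pos c1lt] by simp
next
  case False
  define A where "A = AA m c1 c3 u"
  define Q where "Q = 1 - (A^2 + c1)^m"
  define R where "R = A^2 + c1"
  have Qp: "Q > 0" unfolding Q_def A_def using QA_pos[OF m2 c1pos c1lt u False] .
  have Rp: "R > 0" unfolding R_def using c1pos by (simp add: add_nonneg_pos)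
  have rA: "rhoF m c1 c3 u = sqrt R" unfolding rhoF_def R_def A_def ..
  have FFA: "FF m c1 A = Q powr ((2 * real m - 1) / (2 * real m)) / (R^(m-1) * sqrt R)"
    unfolding FF_def Q_def R_def R_e2[OF Rp[unfolded R_def] m2] ..
  have pw: "(Q powr (1 / (2 * real m)))^(2*m-1) = Q powr ((2 * real m - 1) / (2 * real m))"
    using powr_k_pow[OF Qp, of m "2*m-1"] m2 by (simp add: of_nat_diff)
  have odd: "odd (2*m-1)" using m2 by presburger
  have RR: "R^(m-1) * sqrt R \<noteq> 0" using Rp by simp
  show ?thesis
  proof (cases "u > c3")
    case True
    have "(zF m c1 c3 u)^(2*m-1) = - ((Q powr (1 / (2 * real m)))^(2*m-1))"
      unfolding zF_def A_def[symmetric] Q_def[symmetric] using True odd by (simp add: power_minus_odd)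
    moreover have "a1f m c1 c3 u = - FF m c1 A" unfolding a1f_def A_def using True by simp
    ultimately show ?thesis unfolding pw A_def[symmetric] R_def[symmetric] rA FFA using RR by simp
  next
    case F: False
    then have "u < c3" using False by auto
    then have "(zF m c1 c3 u)^(2*m-1) = (Q powr (1 / (2 * real m)))^(2*m-1)"
      unfolding zF_def A_def[symmetric] Q_def[symmetric] by simp
    moreover have "a1f m c1 c3 u = FF m c1 A" unfolding a1f_def A_def using \<open>u < c3\<close> by simp
    ultimately show ?thesis unfolding pw A_def[symmetric] R_def[symmetric] rA FFA using RR by simp
  qed
qed

end

definition etaF :: "nat \<Rightarrow> real \<Rightarrow> real \<Rightarrow> real \<times> real \<Rightarrow> real^3" where
  "etaF m c1 c3 p = vector [- rhoF m c1 c3 (fst p) * cos (snd p), - rhoF m c1 c3 (fst p) * sin (snd p), zF m c1 c3 (fst p)]"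
definition V1 :: "nat \<Rightarrow> real \<Rightarrow> real \<Rightarrow> real \<times> real \<Rightarrow> real^3" where
  "V1 m c1 c3 p = vector [- rhoD m c1 c3 (fst p) * cos (snd p), - rhoD m c1 c3 (fst p) * sin (snd p), zD m c1 c3 (fst p)]"
definition V2 :: "nat \<Rightarrow> real \<Rightarrow> real \<Rightarrow> real \<times> real \<Rightarrow> real^3" where
  "V2 m c1 c3 p = vector [rhoF m c1 c3 (fst p) * sin (snd p), - rhoF m c1 c3 (fst p) * cos (snd p), 0]"
definition DetaF :: "nat \<Rightarrow> real \<Rightarrow> real \<Rightarrow> real \<times> real \<Rightarrow> (real \<times> real) \<Rightarrow>\<^sub>L (real^3)" where
  "DetaF m c1 c3 p = Blinfun (\<lambda>h. fst h *\<^sub>R V1 m c1 c3 p + snd h *\<^sub>R V2 m c1 c3 p)"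

context
  fixes m :: nat and c1 c3 :: real
  assumes m2: "m \<ge> 2" and c1pos: "0 < c1" and c1lt: "c1 < 1"
begin

lemma DetaF_apply: "blinfun_apply (DetaF m c1 c3 p) h = fst h *\<^sub>R V1 m c1 c3 p + snd h *\<^sub>R V2 m c1 c3 p"
  unfolding DetaF_def by (rule bl2_apply)

lemma comp_fst_cont: assumes "continuous_on (UU m c1 c3) f"
  shows "continuous_on (UU m c1 c3 \<times> UNIV) (\<lambda>p. f (fst p))"
  by (rule continuous_on_compose2[OF assms continuous_on_fst[OF continuous_on_id]]) auto

lemma DetaF_cont: "continuous_on (UU m c1 c3 \<times> UNIV) (DetaF m c1 c3)"
proof (rule continuous_on_blinfun_componentwise)
  fix i :: "real \<times> real" assume "i \<in> Basis"
  then have i: "i = (1,0) \<or> i = (0,1)" unfolding Basis_real2 by auto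
  have c1: "continuous_on (UU m c1 c3 \<times> UNIV) (V1 m c1 c3)"
    unfolding V1_def[abs_def]
    by (intro continuous_on_vector3 continuous_intros comp_fst_cont rhoD_cont[OF m2 c1pos c1lt] zD_cont[OF m2 c1pos c1lt])
  have c2: "continuous_on (UU m c1 c3 \<times> UNIV) (V2 m c1 c3)"
    unfolding V2_def[abs_def]
    by (intro continuous_on_vector3 continuous_intros comp_fst_cont rho_cont[OF m2 c1pos c1lt])
  show "continuous_on (UU m c1 c3 \<times> UNIV) (\<lambda>x. blinfun_apply (DetaF m c1 c3 x) i)"
    using i c1 c2 by (auto simp: DetaF_apply)
qed

lemma alpha_deriv: assumes u: "u \<in> UU m c1 c3"
  shows "(alpha_hat m c1 c3 has_real_derivative a1f m c1 c3 u) (at u)"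
  by (rule has_field_derivative_transform_within_open[OF AA_deriv[OF m2 c1pos c1lt u], of "UU m c1 c3"])
     (use u AA_alpha[OF m2 c1pos c1lt] in auto)

lemma eta_deriv: assumes u: "u \<in> UU m c1 c3"
  shows "(etaF m c1 c3 has_derivative blinfun_apply (DetaF m c1 c3 (u, v))) (at (u, v))"
proof -
  have dr: "((\<lambda>u. - rhoF m c1 c3 u) has_real_derivative - rhoD m c1 c3 u) (at u)"
    using rho_deriv[OF m2 c1pos c1lt u] by (rule derivative_intros)
  have d: "(etaF m c1 c3 has_derivative (\<lambda>h. vector [
     - rhoD m c1 c3 u * fst h * cos v + - rhoF m c1 c3 u * (- sin v * snd h),
     - rhoD m c1 c3 u * fst h * sin v + - rhoF m c1 c3 u * (cos v * snd h),
     zD m c1 c3 u * fst h])) (at (u, v))"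
    unfolding etaF_def[abs_def]
    by (intro has_derivative_vector3 deriv_prod[OF dr DERIV_cos] deriv_prod[OF dr DERIV_sin]
        deriv_fst[OF z_deriv[OF m2 c1pos c1lt u]])
  show ?thesis
    by (rule has_derivative_eq_rhs[OF d])
       (auto simp: fun_eq_iff DetaF_apply V1_def V2_def vec_eq_iff forall_3 algebra_simps)
qed

end

context
  fixes m :: nat and c1 c3 :: real
  assumes m2: "m \<ge> 2" and c1pos: "0 < c1" and c1lt: "c1 < 1"
begin

lemma point_props: assumes u: "u \<in> UU m c1 c3"
  shows "\<exists>Df. (fhat m c1 c3 has_derivative Df) (at (u, v))
                 \<and> is_BG_value m (Df (1, 0)) (Df (0, 1)) (etaF m c1 c3 (u, v))
                 \<and> endo_det_is (Df (1, 0)) (Df (0, 1))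
                     (blinfun_apply (DetaF m c1 c3 (u, v)) (1, 0)) (blinfun_apply (DetaF m c1 c3 (u, v)) (0, 1)) 1"
proof -
  define A where "A = AA m c1 c3 u"
  define a1 where "a1 = a1f m c1 c3 u"
  define r where "r = rhoF m c1 c3 u"
  define z where "z = zF m c1 c3 u"
  define R where "R = A^2 + c1"
  have Ap: "A > 0" unfolding A_def using AA_range[OF m2 c1pos c1lt u] by auto
  have rp: "r > 0" unfolding r_def using rho_pos[OF m2 c1pos c1lt] .
  have Rp: "R > 0" unfolding R_def using c1pos by (simp add: add_nonneg_pos)
  have r2: "r^2 = R" unfolding r_def rhoF_def R_def A_def using Rp[unfolded R_def A_def] by simp
  have ah: "alpha_hat m c1 c3 u = A" unfolding A_def using AA_alpha[OF m2 c1pos c1lt u] .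
  have ad: "(alpha_hat m c1 c3 has_real_derivative a1) (at u)" unfolding a1_def by (rule alpha_deriv[OF m2 c1pos c1lt u])
  define Df where "Df = (\<lambda>h::real\<times>real. vector [
     a1 * fst h * cos v + A * (- sin v * snd h),
     a1 * fst h * sin v + A * (cos v * snd h),
     1 * fst h] :: real^3)"
  have fd: "(fhat m c1 c3 has_derivative Df) (at (u, v))"
  proof -
    have "((\<lambda>p. vector [alpha_hat m c1 c3 (fst p) * cos (snd p), alpha_hat m c1 c3 (fst p) * sin (snd p),
       (\<lambda>x. x) (fst p)] :: real^3) has_derivative Df) (at (u, v))"
      unfolding Df_def ah[symmetric]
      by (intro has_derivative_vector3 deriv_prod[OF ad DERIV_cos] deriv_prod[OF ad DERIV_sin]
          deriv_fst[OF DERIV_ident])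
    then show ?thesis unfolding fhat_def[abs_def] by simp
  qed
  have D10: "Df (1, 0) = vector [a1 * cos v, a1 * sin v, 1]" unfolding Df_def by simp
  have D01: "Df (0, 1) = vector [- A * sin v, A * cos v, 0]" unfolding Df_def by simp
  have eta: "etaF m c1 c3 (u, v) = vector [- r * cos v, - r * sin v, z]" unfolding etaF_def r_def z_def by simp
  have sc: "(sin v)^2 + (cos v)^2 = 1" by (rule sin_cos_squared_add)
  have S: "(- r * cos v)^2 + (- r * sin v)^2 = R"
  proof -
    have "(- r * cos v)^2 + (- r * sin v)^2 = r^2 * ((sin v)^2 + (cos v)^2)" by algebra
    then show ?thesis using sc r2 by (simp only: mult_1_right)
  qed
  have ze: "z^(2*m) = 1 - R^m" unfolding z_def R_def A_def using z_pow_even[OF m2 c1pos c1lt u] .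
  have zo: "z^(2*m-1) = R^(m-1) * r * a1" unfolding z_def R_def A_def r_def a1_def using z_pow_odd[OF m2 c1pos c1lt u] .
  have Phi1: "Phi m (etaF m c1 c3 (u, v)) = 1"
    unfolding eta Phi_def using S ze by simp
  define mu where "mu = 2 * real m * R^(m-1) * r / A"
  have mup: "mu > 0" unfolding mu_def using m2 Rp rp Ap by simp
  have grad: "vector [2 * real m * ((- r * cos v)^2 + (- r * sin v)^2)^(m-1) * (- r * cos v),
      2 * real m * ((- r * cos v)^2 + (- r * sin v)^2)^(m-1) * (- r * sin v), 2 * real m * z^(2*m-1)]
     = mu *\<^sub>R cross3 (Df (1, 0)) (Df (0, 1))"
  proof -
    have c3': "mu * (a1 * cos v * (A * cos v) - a1 * sin v * (- A * sin v)) = 2 * real m * (R^(m-1) * r * a1)"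
    proof -
      have "a1 * cos v * (A * cos v) - a1 * sin v * (- A * sin v) = a1 * A * ((sin v)^2 + (cos v)^2)"
        by algebra
      then show ?thesis unfolding mu_def using sc Ap by simp
    qed
    show ?thesis unfolding S zo D10 D01 cross3_def
      using Ap c3' by (simp add: vec_eq_iff forall_3 mu_def field_simps)
  qed
  have BG: "is_BG_value m (Df (1, 0)) (Df (0, 1)) (etaF m c1 c3 (u, v))"
    unfolding is_BG_value_def
  proof (intro conjI exI[of _ mu])
    show "Phi m (etaF m c1 c3 (u, v)) = 1" by (rule Phi1)
    show "mu > 0" by (rule mup)
    show "GDERIV (Phi m) (etaF m c1 c3 (u, v)) :> mu *\<^sub>R cross3 (Df (1, 0)) (Df (0, 1))"
      using Phi_deriv[of m "etaF m c1 c3 (u, v)"] unfolding grad[symmetric] eta by simp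
  qed
  have E10: "blinfun_apply (DetaF m c1 c3 (u, v)) (1, 0) = zD m c1 c3 u *\<^sub>R Df (1, 0) + 0 *\<^sub>R Df (0, 1)"
    using rp by (simp add: DetaF_apply[OF m2 c1pos c1lt] D10 D01 V1_def V2_def zD_def rhoD_def
       A_def[symmetric] a1_def[symmetric] r_def[symmetric] vec_eq_iff forall_3 field_simps)
  have E01: "blinfun_apply (DetaF m c1 c3 (u, v)) (0, 1) = 0 *\<^sub>R Df (1, 0) + (- r / A) *\<^sub>R Df (0, 1)"
    using Ap by (simp add: DetaF_apply[OF m2 c1pos c1lt] D10 D01 V1_def V2_def
       r_def[symmetric] vec_eq_iff forall_3 field_simps)
  have Edet: "zD m c1 c3 u * (- r / A) - 0 * 0 = 1"
    unfolding zD_def A_def[symmetric] r_def[symmetric] using Ap rp by simp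
  have ED: "endo_det_is (Df (1, 0)) (Df (0, 1))
      (blinfun_apply (DetaF m c1 c3 (u, v)) (1, 0)) (blinfun_apply (DetaF m c1 c3 (u, v)) (0, 1)) 1"
    unfolding endo_det_is_def using E10 E01 Edet by blast
  show ?thesis using fd BG ED by blast
qed

end

theorem mainTheorem5:
  fixes m :: nat and c1 c3 :: real
  assumes "m \<ge> 2" and "0 < c1" and "c1 < 1"
  defines "s \<equiv> sqrt (1 - c1)"
      and "D \<equiv> d1 m c1"
      and "L \<equiv> (1 - c1 ^ m) powr ((2 * real m - 1) / (2 * real m))
                 / c1 powr ((2 * real m - 1) / 2)"
  shows
    "(\<forall>\<alpha>\<in>{0..s}. integrandI m c1 integrable_on {\<alpha>..s})
     \<and> D > 0
     \<and> (\<forall>u\<in>{c3 - D<..<c3 + D}. \<exists>!\<alpha>. \<alpha> \<in> {0<..s} \<and> Ifun m c1 \<alpha> = \<bar>u - c3\<bar>)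
     \<and> alpha_hat m c1 c3 c3 = s
     \<and> (\<exists>a1 a2 :: real \<Rightarrow> real.
          (\<forall>u\<in>{c3 - D<..<c3 + D}.
              (alpha_hat m c1 c3 has_real_derivative a1 u) (at u)
            \<and> (a1 has_real_derivative a2 u) (at u))
        \<and> continuous_on {c3 - D<..<c3 + D} a2
        \<and> a1 c3 = 0 \<and> a2 c3 = 0
        \<and> (a1 \<longlongrightarrow> L) (at_right (c3 - D))
        \<and> (a1 \<longlongrightarrow> - L) (at_left (c3 + D)))
     \<and> (\<exists>\<eta> :: real \<times> real \<Rightarrow> real^3. \<exists>D\<eta> :: real \<times> real \<Rightarrow> ((real \<times> real) \<Rightarrow>\<^sub>L (real^3)).
          continuous_on ({c3 - D<..<c3 + D} \<times> UNIV) D\<eta>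
        \<and> (\<forall>p\<in>{c3 - D<..<c3 + D} \<times> UNIV.
              (\<eta> has_derivative blinfun_apply (D\<eta> p)) (at p)
            \<and> (\<exists>Df. (fhat m c1 c3 has_derivative Df) (at p)
                 \<and> is_BG_value m (Df (1, 0)) (Df (0, 1)) (\<eta> p)
                 \<and> endo_det_is (Df (1, 0)) (Df (0, 1))
                     (blinfun_apply (D\<eta> p) (1, 0)) (blinfun_apply (D\<eta> p) (0, 1)) 1)))
     \<and> (alpha_hat m c1 c3 \<longlongrightarrow> 0) (at_right (c3 - D))
     \<and> (alpha_hat m c1 c3 \<longlongrightarrow> 0) (at_left (c3 + D))"
proof -
  note h = assms(1-3)
  have P1: "\<forall>\<alpha>\<in>{0..s}. integrandI m c1 integrable_on {\<alpha>..s}"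
    unfolding s_def using g_int_sub[OF h] by auto
  have P2: "D > 0" unfolding D_def using D_pos[OF h] .
  have P3: "\<forall>u\<in>{c3 - D<..<c3 + D}. \<exists>!\<alpha>. \<alpha> \<in> {0<..s} \<and> Ifun m c1 \<alpha> = \<bar>u - c3\<bar>"
  proof (intro ballI)
    fix u assume "u \<in> {c3 - D<..<c3 + D}"
    then have "\<bar>u - c3\<bar> < d1 m c1" unfolding D_def by auto
    then show "\<exists>!\<alpha>. \<alpha> \<in> {0<..s} \<and> Ifun m c1 \<alpha> = \<bar>u - c3\<bar>"
      unfolding s_def by (rule alpha_hat_eq(1)[OF h])
  qed
  have P4: "alpha_hat m c1 c3 c3 = s"
    unfolding s_def using AA_alpha[OF h c3_UU[OF h]] AA_c3[OF h] by simp
  have LF: "L = FF m c1 0" unfolding L_def using FF_0[OF h] by simp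
  have P5: "\<exists>a1 a2 :: real \<Rightarrow> real.
          (\<forall>u\<in>{c3 - D<..<c3 + D}.
              (alpha_hat m c1 c3 has_real_derivative a1 u) (at u)
            \<and> (a1 has_real_derivative a2 u) (at u))
        \<and> continuous_on {c3 - D<..<c3 + D} a2
        \<and> a1 c3 = 0 \<and> a2 c3 = 0
        \<and> (a1 \<longlongrightarrow> L) (at_right (c3 - D))
        \<and> (a1 \<longlongrightarrow> - L) (at_left (c3 + D))"
  proof -
    have Q1: "\<forall>u\<in>{c3 - D<..<c3 + D}. (alpha_hat m c1 c3 has_real_derivative a1f m c1 c3 u) (at u)
            \<and> (a1f m c1 c3 has_real_derivative a2f m c1 c3 u) (at u)"
      unfolding D_def using alpha_deriv[OF h] a1_deriv[OF h] by blast
    have Q2: "continuous_on {c3 - D<..<c3 + D} (a2f m c1 c3)" unfolding D_def by (rule a2_cont[OF h])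
    have Q3: "a1f m c1 c3 c3 = 0" by (rule a1_c3[OF h])
    have Q4: "a2f m c1 c3 c3 = 0" by (rule a2_c3[OF h])
    have Q5: "(a1f m c1 c3 \<longlongrightarrow> L) (at_right (c3 - D))" unfolding LF D_def by (rule a1_lim_right[OF h])
    have Q6: "(a1f m c1 c3 \<longlongrightarrow> - L) (at_left (c3 + D))" unfolding LF D_def by (rule a1_lim_left[OF h])
    show ?thesis
      by (rule exI[of _ "a1f m c1 c3"], rule exI[of _ "a2f m c1 c3"]) (use Q1 Q2 Q3 Q4 Q5 Q6 in blast)
  qed
  have P6: "\<exists>\<eta> :: real \<times> real \<Rightarrow> real^3. \<exists>D\<eta> :: real \<times> real \<Rightarrow> ((real \<times> real) \<Rightarrow>\<^sub>L (real^3)).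
          continuous_on ({c3 - D<..<c3 + D} \<times> UNIV) D\<eta>
        \<and> (\<forall>p\<in>{c3 - D<..<c3 + D} \<times> UNIV.
              (\<eta> has_derivative blinfun_apply (D\<eta> p)) (at p)
            \<and> (\<exists>Df. (fhat m c1 c3 has_derivative Df) (at p)
                 \<and> is_BG_value m (Df (1, 0)) (Df (0, 1)) (\<eta> p)
                 \<and> endo_det_is (Df (1, 0)) (Df (0, 1))
                     (blinfun_apply (D\<eta> p) (1, 0)) (blinfun_apply (D\<eta> p) (0, 1)) 1))"
  proof (rule exI[of _ "etaF m c1 c3"], rule exI[of _ "DetaF m c1 c3"], intro conjI ballI)
    show "continuous_on ({c3 - D<..<c3 + D} \<times> UNIV) (DetaF m c1 c3)" unfolding D_def by (rule DetaF_cont[OF h])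
  next
    fix p assume "p \<in> {c3 - D<..<c3 + D} \<times> (UNIV :: real set)"
    then obtain u v where p: "p = (u, v)" and u: "u \<in> UU m c1 c3" unfolding D_def by (cases p) auto
    show "(etaF m c1 c3 has_derivative blinfun_apply (DetaF m c1 c3 p)) (at p)"
      unfolding p by (rule eta_deriv[OF h u])
    show "\<exists>Df. (fhat m c1 c3 has_derivative Df) (at p)
                 \<and> is_BG_value m (Df (1, 0)) (Df (0, 1)) (etaF m c1 c3 p)
                 \<and> endo_det_is (Df (1, 0)) (Df (0, 1))
                     (blinfun_apply (DetaF m c1 c3 p) (1, 0)) (blinfun_apply (DetaF m c1 c3 p) (0, 1)) 1"
      unfolding p by (rule point_props[OF h u])
  qed
  have P7: "(alpha_hat m c1 c3 \<longlongrightarrow> 0) (at_right (c3 - D))" unfolding D_def by (rule alpha_lim_right[OF h])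
  have P8: "(alpha_hat m c1 c3 \<longlongrightarrow> 0) (at_left (c3 + D))" unfolding D_def by (rule alpha_lim_left[OF h])
  show ?thesis using P1 P2 P3 P4 P5 P6 P7 P8 by blast
qed


end
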